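(* Let $\mathcal A=\{\mathbf p\in[0,1]^4: p_1=1\}$ be the set of agreeable memory-one strategies, with the subspace topology from $\mathbb R^4$. The set $\{\mathbf p\in\mathcal A:\ \mathbf p=(1,1,0,0)\text{ or }\mathbf p\text{ is of Nash type}\}$ is a closed convex set whose interior (relative to $\mathcal A$) is the set of good strategies.
   Context: Iterated Prisoner's Dilemma: payoffs $T>R>P>S$ with $2R>T+S$; outcomes of a round are ordered $cc,cd,dc,dd$ (first letter X's play, second Y's; $c$ = cooperate, $d$ = defect); payoff vectors $\mathbf S_X=(R,S,T,P)$, $\mathbf S_Y=(R,T,S,P)$. A memory-one strategy for X is $\mathbf p=(p_1,p_2,p_3,p_4)\in[0,1]^4$, where $p_i$ is the probability that X plays $c$ in the next round given that the current round had the $i$-th outcome. A strategy pattern for Y is an arbitrary (possibly randomized and history-dependent) rule for Y's play in each round. Given initial plays and the rules used, let $\mathbf v^n$ be the probability distribution of the outcome of round $n$; a limit distribution is any limit point $\mathbf v$ of the Cesàro averages $\frac1n\sum_{k=1}^n\mathbf v^k$, and the associated expected payoffs are $s_X=\langle\mathbf v\cdot\mathbf S_X\rangle$, $s_Y=\langle\mathbf v\cdot\mathbf S_Y\rangle$. $\mathbf p$ is agreeable if $p_1=1$. $\mathbf p$ is of Nash type if it is agreeable and, for every strategy pattern of Y and every associated limit distribution, $s_Y\ge R$ implies $s_Y=R$. $\mathbf p$ is good if it is agreeable and, for every strategy pattern of Y and every associated limit distribution, $s_Y\ge R$ implies $s_Y=s_X=R$. *)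

theory Defs
  imports "HOL-Analysis.Analysis"
begin

text \<open>Outcomes of a round, ordered cc, cd, dc, dd (first letter: X's play, second: Y's).\<close>
datatype outcome = CC | CD | DC | DD

lemma UNIV_outcome: "(UNIV :: outcome set) = {CC, CD, DC, DD}"
  using outcome.exhaust by auto

instance outcome :: finite
  by standard (simp add: UNIV_outcome)

fun xcoop :: "outcome \<Rightarrow> bool" where
  "xcoop CC = True" | "xcoop CD = True" | "xcoop DC = False" | "xcoop DD = False"

fun ycoop :: "outcome \<Rightarrow> bool" where
  "ycoop CC = True" | "ycoop CD = False" | "ycoop DC = True" | "ycoop DD = False"

definition outprob :: "real \<Rightarrow> real \<Rightarrow> outcome \<Rightarrow> real" where
  "outprob a b w = (if xcoop w then a else 1 - a) * (if ycoop w then b else 1 - b)"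

text \<open>Memory-one strategies are vectors in real^outcome (i.e. R^4, coordinates
  p_1..p_4 = p CC, p CD, p DC, p DD).  A strategy pattern for Y is a behaviour
  rule y: given the history so far (list of outcomes, most recent first) it
  gives the probability that Y cooperates.  q0 is X's probability of cooperating
  in the first round.  hist_prob gives the probability of a finite history
  (most recent outcome first).\<close>
fun hist_prob :: "real^outcome \<Rightarrow> real \<Rightarrow> (outcome list \<Rightarrow> real) \<Rightarrow> outcome list \<Rightarrow> real" where
  "hist_prob p q0 y [] = 1"
| "hist_prob p q0 y (w # h) =
     hist_prob p q0 y h * outprob (case h of [] \<Rightarrow> q0 | w' # _ \<Rightarrow> p $ w') (y h) w"

text \<open>Distribution of the outcome of round n+1.\<close>
definition round_dist :: "real^outcome \<Rightarrow> real \<Rightarrow> (outcome list \<Rightarrow> real) \<Rightarrow> nat \<Rightarrow> outcome \<Rightarrow> real" where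
  "round_dist p q0 y n w = (\<Sum>h\<in>{h :: outcome list. length h = n}. hist_prob p q0 y (w # h))"

definition cesaro :: "real^outcome \<Rightarrow> real \<Rightarrow> (outcome list \<Rightarrow> real) \<Rightarrow> nat \<Rightarrow> outcome \<Rightarrow> real" where
  "cesaro p q0 y n w = (\<Sum>k<n. round_dist p q0 y k w) / real n"

definition is_limit_dist :: "real^outcome \<Rightarrow> real \<Rightarrow> (outcome list \<Rightarrow> real) \<Rightarrow> (outcome \<Rightarrow> real) \<Rightarrow> bool" where
  "is_limit_dist p q0 y v \<longleftrightarrow>
     (\<exists>r. strict_mono r \<and> (\<forall>w. (\<lambda>k. cesaro p q0 y (r k) w) \<longlonglongrightarrow> v w))"

definition payX :: "real \<Rightarrow> real \<Rightarrow> real \<Rightarrow> real \<Rightarrow> outcome \<Rightarrow> real" where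
  "payX R S T P w = (case w of CC \<Rightarrow> R | CD \<Rightarrow> S | DC \<Rightarrow> T | DD \<Rightarrow> P)"

definition payY :: "real \<Rightarrow> real \<Rightarrow> real \<Rightarrow> real \<Rightarrow> outcome \<Rightarrow> real" where
  "payY R S T P w = (case w of CC \<Rightarrow> R | CD \<Rightarrow> T | DC \<Rightarrow> S | DD \<Rightarrow> P)"

definition score :: "(outcome \<Rightarrow> real) \<Rightarrow> (outcome \<Rightarrow> real) \<Rightarrow> real" where
  "score v pay = (\<Sum>w\<in>UNIV. v w * pay w)"

definition agreeable :: "real^outcome \<Rightarrow> bool" where
  "agreeable p \<longleftrightarrow> p $ CC = 1"

text \<open>Quantification over all initial plays q0 of X, all strategy patterns y of Y
  (including Y's initial play y []), and all associated limit distributions.\<close>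
definition nash_type :: "real \<Rightarrow> real \<Rightarrow> real \<Rightarrow> real \<Rightarrow> real^outcome \<Rightarrow> bool" where
  "nash_type R S T P p \<longleftrightarrow> agreeable p \<and>
     (\<forall>q0 y v. 0 \<le> q0 \<and> q0 \<le> 1 \<and> (\<forall>h. 0 \<le> y h \<and> y h \<le> 1) \<and> is_limit_dist p q0 y v
        \<and> score v (payY R S T P) \<ge> R \<longrightarrow> score v (payY R S T P) = R)"

definition good :: "real \<Rightarrow> real \<Rightarrow> real \<Rightarrow> real \<Rightarrow> real^outcome \<Rightarrow> bool" where
  "good R S T P p \<longleftrightarrow> agreeable p \<and>
     (\<forall>q0 y v. 0 \<le> q0 \<and> q0 \<le> 1 \<and> (\<forall>h. 0 \<le> y h \<and> y h \<le> 1) \<and> is_limit_dist p q0 y v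
        \<and> score v (payY R S T P) \<ge> R \<longrightarrow>
          score v (payY R S T P) = R \<and> score v (payX R S T P) = R)"

definition agreeable_strats :: "(real^outcome) set" where
  "agreeable_strats = {p. (\<forall>w. 0 \<le> p $ w \<and> p $ w \<le> 1) \<and> agreeable p}"

definition repeat_strat :: "real^outcome" where
  "repeat_strat = (\<chi> w. if xcoop w then 1 else 0)"

end

theory Submission
  imports Defs
begin

definition xind :: "outcome \<Rightarrow> real" where "xind w = (if xcoop w then 1 else 0)"
definition yind :: "outcome \<Rightarrow> real" where "yind w = (if ycoop w then 1 else 0)"

lemma sum_outcome: "(\<Sum>w\<in>UNIV. f w) = f CC + f CD + f DC + f DD"
  by (simp add: UNIV_outcome add.assoc)

lemma outprob_nonneg: "0 \<le> a \<Longrightarrow> a \<le> 1 \<Longrightarrow> 0 \<le> b \<Longrightarrow> b \<le> 1 \<Longrightarrow> 0 \<le> outprob a b w"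
  by (simp add: outprob_def)
lemma sum_outprob: "(\<Sum>w\<in>UNIV. outprob a b w) = 1"
  by (simp add: sum_outcome outprob_def algebra_simps)
lemma sum_outprob_x: "(\<Sum>w\<in>UNIV. outprob a b w * xind w) = a"
  by (simp add: sum_outcome outprob_def xind_def algebra_simps)
lemma sum_outprob_y: "(\<Sum>w\<in>UNIV. outprob a b w * yind w) = b"
  by (simp add: sum_outcome outprob_def yind_def algebra_simps)

definition valid :: "real^outcome \<Rightarrow> real \<Rightarrow> (outcome list \<Rightarrow> real) \<Rightarrow> bool" where "valid p q0 y \<longleftrightarrow> (\<forall>w. 0 \<le> p$w \<and> p$w \<le> 1) \<and> 0 \<le> q0 \<and> q0 \<le> 1 \<and> (\<forall>h. 0 \<le> y h \<and> y h \<le> 1)"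

lemma hist_nonneg: assumes "valid p q0 y" shows "0 \<le> hist_prob p q0 y h"
proof (induction h)
  case Nil then show ?case by simp
next
  case (Cons w h)
  have a: "0 \<le> (case h of [] \<Rightarrow> q0 | w' # _ \<Rightarrow> p $ w') \<and> (case h of [] \<Rightarrow> q0 | w' # _ \<Rightarrow> p $ w') \<le> 1"
    using assms by (cases h) (auto simp: valid_def)
  have "0 \<le> outprob (case h of [] \<Rightarrow> q0 | w' # _ \<Rightarrow> p $ w') (y h) w"
    using a assms by (intro outprob_nonneg) (auto simp: valid_def)
  then show ?case using Cons by simp
qed

lemma finite_len: "finite {h :: outcome list. length h = n}"
  using finite_lists_length_eq[of "UNIV :: outcome set" n] by simp

lemma sum_len_Suc:
  "(\<Sum>h\<in>{h::outcome list. length h = Suc n}. f h) = (\<Sum>w\<in>UNIV. \<Sum>h\<in>{h. length h = n}. f (w#h))"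
proof -
  have e: "{h::outcome list. length h = Suc n} = (\<lambda>(w,h). w#h) ` (UNIV \<times> {h. length h = n})"
    by (auto simp: length_Suc_conv image_iff)
  have i: "inj_on (\<lambda>(w,h). w#h) (UNIV \<times> {h::outcome list. length h = n})"
    by (auto simp: inj_on_def)
  show ?thesis unfolding e sum.reindex[OF i] sum.cartesian_product by (simp add: comp_def split_def)
qed

lemma rd_0: "round_dist p q0 y 0 w = outprob q0 (y []) w"
  by (simp add: round_dist_def)

lemma rd_Suc: "round_dist p q0 y (Suc k) w' =
   (\<Sum>w\<in>UNIV. \<Sum>h\<in>{h. length h = k}. hist_prob p q0 y (w#h) * outprob (p$w) (y (w#h)) w')"
  unfolding round_dist_def sum_len_Suc by simp

lemma rd_Suc_mem1: assumes "\<And>w h. y (w#h) = q w"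
  shows "round_dist p q0 y (Suc k) w' = (\<Sum>w\<in>UNIV. round_dist p q0 y k w * outprob (p$w) (q w) w')"
proof -
  have "round_dist p q0 y (Suc k) w' = (\<Sum>w\<in>UNIV. \<Sum>h\<in>{h. length h = k}. hist_prob p q0 y (w#h) * outprob (p$w) (q w) w')"
    unfolding rd_Suc assms by (rule refl)
  also have "\<dots> = (\<Sum>w\<in>UNIV. round_dist p q0 y k w * outprob (p$w) (q w) w')"
    unfolding round_dist_def by (simp add: sum_distrib_right)
  finally show ?thesis .
qed

lemma rd_nonneg: "valid p q0 y \<Longrightarrow> 0 \<le> round_dist p q0 y k w"
  unfolding round_dist_def by (intro sum_nonneg hist_nonneg)

lemma rd_Suc_weighted: "(\<Sum>w'\<in>UNIV. round_dist p q0 y (Suc k) w' * g w') =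
  (\<Sum>w\<in>UNIV. \<Sum>h\<in>{h. length h = k}. hist_prob p q0 y (w#h) * (\<Sum>w'\<in>UNIV. outprob (p$w) (y (w#h)) w' * g w'))"
proof -
  have "(\<Sum>w'\<in>UNIV. round_dist p q0 y (Suc k) w' * g w') =
    (\<Sum>w'\<in>UNIV. \<Sum>w\<in>UNIV. \<Sum>h\<in>{h. length h = k}. hist_prob p q0 y (w#h) * (outprob (p$w) (y (w#h)) w' * g w'))"
    unfolding rd_Suc by (simp add: sum_distrib_right mult.assoc)
  also have "\<dots> = (\<Sum>w\<in>UNIV. \<Sum>w'\<in>UNIV. \<Sum>h\<in>{h. length h = k}. hist_prob p q0 y (w#h) * (outprob (p$w) (y (w#h)) w' * g w'))"
    by (rule sum.swap)
  also have "\<dots> = (\<Sum>w\<in>UNIV. \<Sum>h\<in>{h. length h = k}. \<Sum>w'\<in>UNIV. hist_prob p q0 y (w#h) * (outprob (p$w) (y (w#h)) w' * g w'))"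
    by (rule sum.cong[OF refl], rule sum.swap)
  finally show ?thesis by (simp add: sum_distrib_left)
qed

lemma rd_sum: assumes "valid p q0 y" shows "(\<Sum>w\<in>UNIV. round_dist p q0 y k w) = 1"
proof (induction k)
  case 0 then show ?case by (simp add: rd_0 sum_outprob)
next
  case (Suc k)
  have "(\<Sum>w\<in>UNIV. round_dist p q0 y (Suc k) w) = (\<Sum>w\<in>UNIV. round_dist p q0 y (Suc k) w * 1)" by simp
  also have "\<dots> = (\<Sum>w\<in>UNIV. round_dist p q0 y k w)"
    unfolding rd_Suc_weighted by (simp add: sum_outprob round_dist_def)
  finally show ?case using Suc by simp
qed

definition "E p q0 y k f = (\<Sum>w\<in>UNIV. round_dist p q0 y k w * f w)"

lemma E_x: "E p q0 y (Suc k) xind = E p q0 y k (\<lambda>w. p$w)"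
  unfolding E_def rd_Suc_weighted by (simp add: sum_outprob_x round_dist_def sum_distrib_right)

lemma E_y: assumes "\<And>w h. y (w#h) = q w" shows "E p q0 y (Suc k) yind = E p q0 y k q"
  unfolding E_def rd_Suc_weighted by (simp add: sum_outprob_y round_dist_def sum_distrib_right assms)

lemma ces_E: "(\<Sum>w\<in>UNIV. cesaro p q0 y n w * f w) = (\<Sum>k<n. E p q0 y k f) / real n"
proof -
  have "(\<Sum>w\<in>UNIV. cesaro p q0 y n w * f w) = (\<Sum>w\<in>UNIV. \<Sum>k<n. round_dist p q0 y k w * f w) / real n"
    unfolding cesaro_def by (simp add: sum_divide_distrib sum_distrib_right)
  also have "\<dots> = (\<Sum>k<n. \<Sum>w\<in>UNIV. round_dist p q0 y k w * f w) / real n"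
    by (subst sum.swap) (rule refl)
  finally show ?thesis unfolding E_def .
qed

lemma E_bounds: assumes v: "valid p q0 y" and g: "\<And>w. 0 \<le> g w \<and> g w \<le> 1"
  shows "0 \<le> E p q0 y n g \<and> E p q0 y n g \<le> 1"
proof
  show "0 \<le> E p q0 y n g" unfolding E_def using rd_nonneg[OF v] g by (intro sum_nonneg mult_nonneg_nonneg) auto
  have "E p q0 y n g \<le> (\<Sum>w\<in>UNIV. round_dist p q0 y n w)"
    unfolding E_def using rd_nonneg[OF v] g by (intro sum_mono) (auto intro: mult_left_le)
  then show "E p q0 y n g \<le> 1" using rd_sum[OF v] by simp
qed

lemma telescope_limit:
  assumes v: "valid p q0 y" and L: "is_limit_dist p q0 y vv"
    and step: "\<And>k. E p q0 y (Suc k) g = E p q0 y k f" and g: "\<And>w. 0 \<le> g w \<and> g w \<le> 1"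
  shows "(\<Sum>w\<in>UNIV. vv w * (f w - g w)) = 0"
proof -
  have cs: "(\<Sum>w\<in>UNIV. cesaro p q0 y n w * (f w - g w)) = (E p q0 y n g - E p q0 y 0 g) / real n" for n
  proof -
    have "E p q0 y k (\<lambda>w. f w - g w) = E p q0 y (Suc k) g - E p q0 y k g" for k
      unfolding step unfolding E_def by (simp add: right_diff_distrib sum_subtractf)
    then show ?thesis unfolding ces_E using sum_lessThan_telescope[of "\<lambda>k. E p q0 y k g" n] by simp
  qed
  have Eb: "\<And>n. 0 \<le> E p q0 y n g \<and> E p q0 y n g \<le> 1" using E_bounds[OF v] g by blast
  have lim0: "(\<lambda>n. (E p q0 y n g - E p q0 y 0 g) / real n) \<longlonglongrightarrow> 0"
  proof (rule real_tendsto_sandwich)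
    show "\<forall>\<^sub>F n in sequentially. - 1 / real n \<le> (E p q0 y n g - E p q0 y 0 g) / real n"
      using Eb by (intro always_eventually allI divide_right_mono) (smt (verit), simp)
    show "\<forall>\<^sub>F n in sequentially. (E p q0 y n g - E p q0 y 0 g) / real n \<le> 1 / real n"
      using Eb by (intro always_eventually allI divide_right_mono) (smt (verit), simp)
    show "(\<lambda>n. - 1 / real n) \<longlonglongrightarrow> 0" by (rule lim_const_over_n)
    show "(\<lambda>n. 1 / real n) \<longlonglongrightarrow> 0" by (rule lim_const_over_n)
  qed
  obtain r where r: "strict_mono r" "\<And>w. (\<lambda>k. cesaro p q0 y (r k) w) \<longlonglongrightarrow> vv w"
    using L unfolding is_limit_dist_def by blast
  have A: "(\<lambda>k. \<Sum>w\<in>UNIV. cesaro p q0 y (r k) w * (f w - g w)) \<longlonglongrightarrow> (\<Sum>w\<in>UNIV. vv w * (f w - g w))"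
    by (intro tendsto_sum tendsto_mult_right r(2))
  have B: "(\<lambda>k. \<Sum>w\<in>UNIV. cesaro p q0 y (r k) w * (f w - g w)) \<longlonglongrightarrow> 0"
    using LIMSEQ_subseq_LIMSEQ[OF lim0 r(1)] unfolding cs comp_def .
  show ?thesis using LIMSEQ_unique[OF A B] .
qed

lemma ces_nonneg: "valid p q0 y \<Longrightarrow> 0 \<le> cesaro p q0 y n w"
  unfolding cesaro_def by (intro divide_nonneg_nonneg sum_nonneg rd_nonneg) auto

lemma ces_sum: assumes v: "valid p q0 y" and n: "n \<ge> 1" shows "(\<Sum>w\<in>UNIV. cesaro p q0 y n w) = 1"
proof -
  have "(\<Sum>w\<in>UNIV. cesaro p q0 y n w) = (\<Sum>w\<in>UNIV. cesaro p q0 y n w * 1)" by simp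
  also have "\<dots> = (\<Sum>k<n. E p q0 y k (\<lambda>_. 1)) / real n" by (rule ces_E)
  also have "\<dots> = 1" using n by (simp add: E_def rd_sum[OF v])
  finally show ?thesis .
qed

lemma ces_le1: assumes v: "valid p q0 y" shows "cesaro p q0 y n w \<le> 1"
proof (cases "n = 0")
  case True then show ?thesis by (simp add: cesaro_def)
next
  case False
  have "cesaro p q0 y n w \<le> (\<Sum>w\<in>UNIV. cesaro p q0 y n w)"
    by (rule member_le_sum) (auto intro: ces_nonneg[OF v])
  then show ?thesis using ces_sum[OF v] False by simp
qed

lemma limdist_nonneg: assumes v: "valid p q0 y" and L: "is_limit_dist p q0 y vv" shows "0 \<le> vv w"
proof -
  obtain r where r: "strict_mono r" "\<And>w. (\<lambda>k. cesaro p q0 y (r k) w) \<longlonglongrightarrow> vv w"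
    using L unfolding is_limit_dist_def by blast
  show ?thesis by (rule LIMSEQ_le_const[OF r(2)]) (auto intro: ces_nonneg[OF v])
qed

lemma limdist_sum: assumes v: "valid p q0 y" and L: "is_limit_dist p q0 y vv" shows "(\<Sum>w\<in>UNIV. vv w) = 1"
proof -
  obtain r where r: "strict_mono r" "\<And>w. (\<lambda>k. cesaro p q0 y (r k) w) \<longlonglongrightarrow> vv w"
    using L unfolding is_limit_dist_def by blast
  have A: "(\<lambda>k. \<Sum>w\<in>UNIV. cesaro p q0 y (r k) w) \<longlonglongrightarrow> (\<Sum>w\<in>UNIV. vv w)"
    by (intro tendsto_sum r(2))
  have "\<forall>\<^sub>F k in sequentially. (\<Sum>w\<in>UNIV. cesaro p q0 y (r k) w) = 1"
    unfolding eventually_sequentially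
  proof (intro exI[of _ 1] allI impI)
    fix k :: nat assume "1 \<le> k"
    then have "1 \<le> r k" using seq_suble[OF r(1), of k] by simp
    then show "(\<Sum>w\<in>UNIV. cesaro p q0 y (r k) w) = 1" by (rule ces_sum[OF v])
  qed
  then have B: "(\<lambda>k. \<Sum>w\<in>UNIV. cesaro p q0 y (r k) w) \<longlonglongrightarrow> 1" by (rule tendsto_eventually)
  show ?thesis using LIMSEQ_unique[OF A B] .
qed

lemma limdist_zero: assumes L: "is_limit_dist p q0 y vv" and z: "\<And>k. round_dist p q0 y k w = 0"
  shows "vv w = 0"
proof -
  obtain r where r: "strict_mono r" "\<And>w. (\<lambda>k. cesaro p q0 y (r k) w) \<longlonglongrightarrow> vv w"
    using L unfolding is_limit_dist_def by blast
  have "cesaro p q0 y n w = 0" for n unfolding cesaro_def z by simp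
  then have "(\<lambda>k. cesaro p q0 y (r k) w) \<longlonglongrightarrow> 0" by simp
  then show ?thesis using LIMSEQ_unique r(2) by blast
qed

lemma limdist_ex: assumes v: "valid p q0 y" shows "\<exists>vv. is_limit_dist p q0 y vv"
proof -
  define F where "F n = (\<chi> w. cesaro p q0 y n w)" for n
  have "norm (F n) \<le> real CARD(outcome)" for n
  proof -
    have "norm (F n) \<le> (\<Sum>i\<in>UNIV. \<bar>F n $ i\<bar>)" by (rule norm_le_l1_cart)
    also have "\<dots> \<le> (\<Sum>i\<in>(UNIV::outcome set). 1)"
      unfolding F_def using ces_nonneg[OF v] ces_le1[OF v] by (intro sum_mono) auto
    finally show ?thesis by simp
  qed
  then have "bounded (range F)" unfolding bounded_iff by blast
  then obtain l r where r: "strict_mono r" "(F \<circ> r) \<longlonglongrightarrow> l"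
    using bounded_imp_convergent_subsequence by blast
  have "(\<lambda>k. cesaro p q0 y (r k) w) \<longlonglongrightarrow> l $ w" for w
    using tendsto_vec_nth[OF r(2), of w] unfolding F_def comp_def by simp
  then show ?thesis unfolding is_limit_dist_def using r(1) by blast
qed

lemma valid_A: "p \<in> agreeable_strats \<Longrightarrow> 0 \<le> q0 \<Longrightarrow> q0 \<le> 1 \<Longrightarrow> (\<forall>h. 0 \<le> y h \<and> y h \<le> 1) \<Longrightarrow> valid p q0 y"
  by (simp add: valid_def agreeable_strats_def)

lemma scoreY: "score v (payY R S T P) = v CC * R + v CD * T + v DC * S + v DD * P"
  by (simp add: score_def payY_def sum_outcome)
lemma scoreX: "score v (payX R S T P) = v CC * R + v CD * S + v DC * T + v DD * P"
  by (simp add: score_def payX_def sum_outcome)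

lemma limfacts:
  assumes pA: "p \<in> agreeable_strats" and v: "valid p q0 y" and L: "is_limit_dist p q0 y vv"
  shows "0 \<le> vv CC" "0 \<le> vv CD" "0 \<le> vv DC" "0 \<le> vv DD"
    "vv CC + vv CD + vv DC + vv DD = 1"
    "vv CD * (1 - p$CD) = vv DC * p$DC + vv DD * p$DD"
proof -
  show "0 \<le> vv CC" "0 \<le> vv CD" "0 \<le> vv DC" "0 \<le> vv DD" using limdist_nonneg[OF v L] by auto
  show "vv CC + vv CD + vv DC + vv DD = 1" using limdist_sum[OF v L] by (simp add: sum_outcome)
  have "(\<Sum>w\<in>UNIV. vv w * (p$w - xind w)) = 0"
    by (rule telescope_limit[OF v L E_x]) (simp add: xind_def)
  then show "vv CD * (1 - p$CD) = vv DC * p$DC + vv DD * p$DD"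
    using pA by (simp add: sum_outcome xind_def agreeable_strats_def agreeable_def algebra_simps)
qed

definition allD :: "outcome list \<Rightarrow> real" where "allD h = 0"

lemma allD_facts:
  assumes pA: "p \<in> agreeable_strats" and L: "is_limit_dist p 1 allD vv"
  shows "vv CC = 0" "vv DC = 0" "p$CD = 1 \<Longrightarrow> vv DD = 0"
proof -
  have v: "valid p 1 allD" using pA by (simp add: valid_def agreeable_strats_def allD_def)
  have z: "round_dist p 1 allD k w = 0" if "ycoop w" for k w
    using that by (cases w) (auto simp: outprob_def allD_def round_dist_def)
  show "vv CC = 0" by (rule limdist_zero[OF L], rule z) simp
  show "vv DC = 0" by (rule limdist_zero[OF L], rule z) simp
  assume a: "p$CD = 1"
  have p1: "p$CC = 1" using pA by (simp add: agreeable_strats_def agreeable_def)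
  have "round_dist p 1 allD k DD = 0" for k
  proof (induction k)
    case 0 then show ?case by (simp add: rd_0 outprob_def)
  next
    case (Suc k)
    have "round_dist p 1 allD (Suc k) DD = (\<Sum>w\<in>UNIV. round_dist p 1 allD k w * outprob (p$w) 0 DD)"
      by (rule rd_Suc_mem1) (simp add: allD_def)
    also have "\<dots> = 0" using Suc z[of DC k] a p1 by (simp add: sum_outcome outprob_def)
    finally show ?case .
  qed
  then show "vv DD = 0" by (rule limdist_zero[OF L])
qed

definition y2 :: "outcome list \<Rightarrow> real" where
  "y2 h = (case h of [] \<Rightarrow> 1 | w # _ \<Rightarrow> if w = CC then 0 else 1)"

lemma y2_facts:
  assumes pA: "p \<in> agreeable_strats" and L: "is_limit_dist p 1 y2 vv"
  shows "vv DD = 0" "vv CC = vv CD"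
proof -
  have v: "valid p 1 y2" using pA by (simp add: valid_def agreeable_strats_def y2_def split: list.split)
  define q :: "outcome \<Rightarrow> real" where "q w = (if w = CC then 0 else 1)" for w
  have yq: "y2 (w#h) = q w" for w h by (simp add: y2_def q_def)
  have p1: "p$CC = 1" using pA by (simp add: agreeable_strats_def agreeable_def)
  have "round_dist p 1 y2 k DD = 0" for k
  proof (cases k)
    case 0 then show ?thesis by (simp add: rd_0 outprob_def y2_def)
  next
    case (Suc j)
    have "round_dist p 1 y2 (Suc j) DD = (\<Sum>w\<in>UNIV. round_dist p 1 y2 j w * outprob (p$w) (q w) DD)"
      by (rule rd_Suc_mem1) (rule yq)
    also have "\<dots> = 0" using p1 by (simp add: sum_outcome outprob_def q_def)
    finally show ?thesis using Suc by simp
  qed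
  then show d: "vv DD = 0" by (rule limdist_zero[OF L])
  have "(\<Sum>w\<in>UNIV. vv w * (q w - yind w)) = 0"
    by (rule telescope_limit[OF v L E_y[of y2 q, OF yq]]) (simp add: yind_def)
  then show "vv CC = vv CD" using d by (simp add: sum_outcome yind_def q_def)
qed

definition Ineq :: "real \<Rightarrow> real \<Rightarrow> real \<Rightarrow> real \<Rightarrow> real^outcome \<Rightarrow> bool" where
  "Ineq R S T P p \<longleftrightarrow> (T-R)*p$DC \<le> (R-S)*(1-p$CD) \<and> (T-R)*p$DD \<le> (R-P)*(1-p$CD)"
definition Strict :: "real \<Rightarrow> real \<Rightarrow> real \<Rightarrow> real \<Rightarrow> real^outcome \<Rightarrow> bool" where
  "Strict R S T P p \<longleftrightarrow> (T-R)*p$DC < (R-S)*(1-p$CD) \<and> (T-R)*p$DD < (R-P)*(1-p$CD)"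

lemma nashD: "nash_type R S T P p \<Longrightarrow> valid p q0 y \<Longrightarrow> is_limit_dist p q0 y v \<Longrightarrow>
  R \<le> score v (payY R S T P) \<Longrightarrow> score v (payY R S T P) = R"
  unfolding nash_type_def valid_def by blast

lemma goodD: "good R S T P p \<Longrightarrow> valid p q0 y \<Longrightarrow> is_limit_dist p q0 y v \<Longrightarrow>
  R \<le> score v (payY R S T P) \<Longrightarrow> score v (payX R S T P) = R"
  unfolding good_def valid_def by blast

lemma ident:
  fixes R S T P a b c v1 v2 v3 v4 :: real
  assumes sum: "v1+v2+v3+v4 = 1" and ak: "v2*(1-a) = v3*b + v4*c"
  shows "(1-a)*(v1*R + v2*T + v3*S + v4*P - R) = v3*((T-R)*b - (R-S)*(1-a)) + v4*((T-R)*c - (R-P)*(1-a))"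
proof -
  have v1: "v1 = 1 - v2 - v3 - v4" using sum by simp
  have "(1-a)*(v1*R + v2*T + v3*S + v4*P - R) = (T-R)*(v2*(1-a)) - (1-a)* v3*(R-S) - (1-a)* v4*(R-P)"
    by (simp add: v1 algebra_simps)
  also have "\<dots> = v3*((T-R)*b - (R-S)*(1-a)) + v4*((T-R)*c - (R-P)*(1-a))"
    unfolding ak by (simp add: algebra_simps)
  finally show ?thesis .
qed

context
  fixes R S T P :: real
  assumes TR: "T > R" and RP: "R > P" and PS: "P > S" and TS: "2*R > T+S"
begin

lemma validA: "p \<in> agreeable_strats \<Longrightarrow> 0 \<le> q0 \<Longrightarrow> q0 \<le> 1 \<Longrightarrow> (\<forall>h. 0 \<le> y h \<and> y h \<le> 1) \<Longrightarrow> valid p q0 y"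
  by (simp add: valid_def agreeable_strats_def)

lemma I_nash:
  assumes pA: "p \<in> agreeable_strats" and a: "p$CD < 1" and I: "Ineq R S T P p"
  shows "nash_type R S T P p"
  unfolding nash_type_def
proof (intro conjI allI impI)
  show "agreeable p" using pA by (simp add: agreeable_strats_def)
  fix q0 y vv
  assume H: "0 \<le> q0 \<and> q0 \<le> 1 \<and> (\<forall>h. 0 \<le> y h \<and> y h \<le> 1) \<and> is_limit_dist p q0 y vv \<and> R \<le> score vv (payY R S T P)"
  have v: "valid p q0 y" using H pA by (simp add: valid_def agreeable_strats_def)
  have L: "is_limit_dist p q0 y vv" using H by simp
  note F = limfacts[OF pA v L]
  have e: "(1 - p$CD) * (score vv (payY R S T P) - R) = vv DC*((T-R)*p$DC - (R-S)*(1-p$CD)) + vv DD*((T-R)*p$DD - (R-P)*(1-p$CD))"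
    unfolding scoreY by (rule ident[OF F(5) F(6)])
  have "vv DC*((T-R)*p$DC - (R-S)*(1-p$CD)) \<le> 0" using F(3) I unfolding Ineq_def by (intro mult_nonneg_nonpos) auto
  moreover have "vv DD*((T-R)*p$DD - (R-P)*(1-p$CD)) \<le> 0" using F(4) I unfolding Ineq_def by (intro mult_nonneg_nonpos) auto
  ultimately have "(1 - p$CD) * (score vv (payY R S T P) - R) \<le> 0" using e by simp
  then have "score vv (payY R S T P) - R \<le> 0" using a by (simp add: mult_le_0_iff)
  then show "score vv (payY R S T P) = R" using H by simp
qed

lemma nash_CD:
  assumes pA: "p \<in> agreeable_strats" and N: "nash_type R S T P p"
  shows "p$CD < 1"
proof (rule ccontr)
  assume "\<not> p$CD < 1"
  moreover have "p$CD \<le> 1" using pA by (simp add: agreeable_strats_def)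
  ultimately have a: "p$CD = 1" by simp
  have v: "valid p 1 allD" using pA by (simp add: valid_def agreeable_strats_def allD_def)
  obtain vv where L: "is_limit_dist p 1 allD vv" using limdist_ex[OF v] by blast
  note F = limfacts[OF pA v L] and G = allD_facts[OF pA L]
  have "vv CD = 1" using F(5) G a by simp
  then have sc: "score vv (payY R S T P) = T" using G a by (simp add: scoreY)
  have "score vv (payY R S T P) = R"
    using nashD[OF N v L] sc TR by simp
  then show False using sc TR by simp
qed

lemma nash_ineq2:
  assumes pA: "p \<in> agreeable_strats" and N: "nash_type R S T P p"
  shows "(T-R)*p$DD \<le> (R-P)*(1-p$CD)"
proof (rule ccontr)
  assume c: "\<not> ?thesis"
  have v: "valid p 1 allD" using pA by (simp add: valid_def agreeable_strats_def allD_def)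
  obtain vv where L: "is_limit_dist p 1 allD vv" using limdist_ex[OF v] by blast
  note F = limfacts[OF pA v L] and G = allD_facts[OF pA L]
  have a: "p$CD \<le> 1" using pA by (simp add: agreeable_strats_def)
  have sc: "score vv (payY R S T P) = vv CD * T + vv DD * P" using G by (simp add: scoreY)
  have s1: "vv CD + vv DD = 1" using F(5) G by simp
  have ak: "vv CD * (1 - p$CD) = vv DD * p$DD" using F(6) G by simp
  have gt: "score vv (payY R S T P) > R"
  proof (rule ccontr)
    assume "\<not> score vv (payY R S T P) > R"
    moreover have "vv CD * R + vv DD * R = R" using s1 by (metis distrib_right mult_1)
    moreover have "vv CD * (T - R) - vv DD * (R - P) = (vv CD * T + vv DD * P) - (vv CD * R + vv DD * R)"
      by (simp add: algebra_simps)
    ultimately have le: "vv CD * (T - R) \<le> vv DD * (R - P)" using sc by linarith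
    show False
    proof (cases "vv DD = 0")
      case True
      then have "vv CD > 0" using s1 by simp
      then have "vv CD * (T - R) > 0" using TR by simp
      then show ?thesis using le True by simp
    next
      case False
      then have pos: "vv DD > 0" using F(4) by simp
      have "(1 - p$CD) * (vv CD * (T - R)) \<le> (1 - p$CD) * (vv DD * (R - P))"
        using le a by (intro mult_left_mono) auto
      also have "\<dots> < vv DD * (p$DD * (T-R))"
      proof -
        have "vv DD * ((R-P)*(1-p$CD)) < vv DD * ((T-R)*p$DD)" using pos c by (intro mult_strict_left_mono) auto
        then show ?thesis by (simp add: algebra_simps)
      qed
      also have "\<dots> = (vv DD * p$DD) * (T-R)" by (simp add: mult.assoc)
      also have "\<dots> = (1 - p$CD) * (vv CD * (T - R))" unfolding ak[symmetric] by (simp add: mult_ac)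
      finally show False by simp
    qed
  qed
  have "score vv (payY R S T P) = R"
    using nashD[OF N v L] gt by simp
  then show False using gt by simp
qed

lemma y2_valid: "p \<in> agreeable_strats \<Longrightarrow> valid p 1 y2"
  by (simp add: valid_def agreeable_strats_def y2_def split: list.split)

lemma nash_ineq1:
  assumes pA: "p \<in> agreeable_strats" and N: "nash_type R S T P p"
  shows "(T-R)*p$DC \<le> (R-S)*(1-p$CD)"
proof (rule ccontr)
  assume c: "\<not> ?thesis"
  have v: "valid p 1 y2" using pA by (rule y2_valid)
  obtain vv where L: "is_limit_dist p 1 y2 vv" using limdist_ex[OF v] by blast
  note F = limfacts[OF pA v L] and G = y2_facts[OF pA L]
  have a: "p$CD \<le> 1" using pA by (simp add: agreeable_strats_def)
  have sc: "score vv (payY R S T P) - R = vv CD * (T - R) - vv DC * (R - S)"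
  proof -
    have R1: "vv CC * R + vv CD * R + vv DC * R + vv DD * R = R" using F(5) by (metis distrib_right mult_1)
    show ?thesis using G R1 unfolding scoreY by (simp add: algebra_simps)
  qed
  have s1: "2 * vv CD + vv DC = 1" using F(5) G by simp
  have ak: "vv CD * (1 - p$CD) = vv DC * p$DC" using F(6) G by simp
  have gt: "score vv (payY R S T P) > R"
  proof (rule ccontr)
    assume "\<not> score vv (payY R S T P) > R"
    then have le: "vv CD * (T - R) \<le> vv DC * (R - S)" using sc by simp
    show False
    proof (cases "vv DC = 0")
      case True
      then have "vv CD > 0" using s1 by simp
      then have "vv CD * (T - R) > 0" using TR by simp
      then show ?thesis using le True by simp
    next
      case False
      then have pos: "vv DC > 0" using F(3) by simp
      have "(1 - p$CD) * (vv CD * (T - R)) \<le> (1 - p$CD) * (vv DC * (R - S))"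
        using le a by (intro mult_left_mono) auto
      also have "\<dots> < vv DC * (p$DC * (T-R))"
      proof -
        have "vv DC * ((R-S)*(1-p$CD)) < vv DC * ((T-R)*p$DC)" using pos c by (intro mult_strict_left_mono) auto
        then show ?thesis by (simp add: algebra_simps)
      qed
      also have "\<dots> = (vv DC * p$DC) * (T-R)" by (simp add: mult.assoc)
      also have "\<dots> = (1 - p$CD) * (vv CD * (T - R))" unfolding ak[symmetric] by (simp add: mult_ac)
      finally show False by simp
    qed
  qed
  have "score vv (payY R S T P) = R"
    using nashD[OF N v L] gt by simp
  then show False using gt by simp
qed


lemma good_nash: "good R S T P p \<Longrightarrow> nash_type R S T P p"
  unfolding good_def nash_type_def by blast

lemma good_Strict:
  assumes pA: "p \<in> agreeable_strats" and G0: "good R S T P p"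
  shows "Strict R S T P p"
proof -
  have N: "nash_type R S T P p" using G0 by (rule good_nash)
  have a: "p$CD < 1" using nash_CD[OF pA N] .
  have i1: "(T-R)*p$DC \<le> (R-S)*(1-p$CD)" using nash_ineq1[OF pA N] .
  have i2: "(T-R)*p$DD \<le> (R-P)*(1-p$CD)" using nash_ineq2[OF pA N] .
  have s2: "(T-R)*p$DD < (R-P)*(1-p$CD)"
  proof (rule ccontr)
    assume "\<not> ?thesis"
    then have eq: "(T-R)*p$DD = (R-P)*(1-p$CD)" using i2 by simp
    have v: "valid p 1 allD" using pA by (simp add: valid_def agreeable_strats_def allD_def)
    obtain vv where L: "is_limit_dist p 1 allD vv" using limdist_ex[OF v] by blast
    note F = limfacts[OF pA v L] and G = allD_facts[OF pA L]
    have e: "(1 - p$CD) * (score vv (payY R S T P) - R) = vv DC*((T-R)*p$DC - (R-S)*(1-p$CD)) + vv DD*((T-R)*p$DD - (R-P)*(1-p$CD))"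
      unfolding scoreY by (rule ident[OF F(5) F(6)])
    then have "(1 - p$CD) * (score vv (payY R S T P) - R) = 0" using G eq by simp
    then have sY: "score vv (payY R S T P) = R" using a by simp
    then have "score vv (payX R S T P) = R"
      using goodD[OF G0 v L] by simp
    moreover have "score vv (payX R S T P) = vv CD * S + vv DD * P" using G by (simp add: scoreX)
    moreover have "vv CD * S \<le> vv CD * P" using F(2) PS by (simp add: mult_left_mono)
    moreover have "vv CD + vv DD = 1" using F(5) G by simp
    ultimately have "R \<le> vv CD * P + vv DD * P" by linarith
    also have "\<dots> = P" using \<open>vv CD + vv DD = 1\<close> by (metis distrib_right mult_1)
    finally show False using RP by simp
  qed
  have s1: "(T-R)*p$DC < (R-S)*(1-p$CD)"
  proof (rule ccontr)
    assume "\<not> ?thesis"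
    then have eq: "(T-R)*p$DC = (R-S)*(1-p$CD)" using i1 by simp
    have v: "valid p 1 y2" using pA by (rule y2_valid)
    obtain vv where L: "is_limit_dist p 1 y2 vv" using limdist_ex[OF v] by blast
    note F = limfacts[OF pA v L] and G = y2_facts[OF pA L]
    have e: "(1 - p$CD) * (score vv (payY R S T P) - R) = vv DC*((T-R)*p$DC - (R-S)*(1-p$CD)) + vv DD*((T-R)*p$DD - (R-P)*(1-p$CD))"
      unfolding scoreY by (rule ident[OF F(5) F(6)])
    then have "(1 - p$CD) * (score vv (payY R S T P) - R) = 0" using G eq by simp
    then have sY: "score vv (payY R S T P) = R" using a by simp
    then have sX: "score vv (payX R S T P) = R"
      using goodD[OF G0 v L] by simp
    have "(vv CD + vv DC) * (T + S - 2*R) = (score vv (payY R S T P) - R) + (score vv (payX R S T P) - R)"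
    proof -
      have R1: "vv CC * R + vv CD * R + vv DC * R + vv DD * R = R" using F(5) by (metis distrib_right mult_1)
      show ?thesis using G R1 unfolding scoreY scoreX by (simp add: algebra_simps)
    qed
    then have "(vv CD + vv DC) * (T + S - 2*R) = 0" using sY sX by simp
    then have "vv CD + vv DC = 0" using TS by simp
    then show False using F(2) F(3) F(5) G by simp
  qed
  show ?thesis unfolding Strict_def using s1 s2 by simp
qed

lemma Strict_good:
  assumes pA: "p \<in> agreeable_strats" and St: "Strict R S T P p"
  shows "good R S T P p"
  unfolding good_def
proof (intro conjI allI impI)
  show "agreeable p" using pA by (simp add: agreeable_strats_def)
  have c0: "0 \<le> p$DD" using pA by (simp add: agreeable_strats_def)
  have "0 \<le> (T-R)*p$DD" using c0 TR by simp
  then have a: "p$CD < 1" using St RP unfolding Strict_def by (smt (verit) mult_le_0_iff)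
  fix q0 y vv
  assume H: "0 \<le> q0 \<and> q0 \<le> 1 \<and> (\<forall>h. 0 \<le> y h \<and> y h \<le> 1) \<and> is_limit_dist p q0 y vv \<and> R \<le> score vv (payY R S T P)"
  have v: "valid p q0 y" using H pA by (simp add: valid_def agreeable_strats_def)
  have L: "is_limit_dist p q0 y vv" using H by simp
  note F = limfacts[OF pA v L]
  have e: "(1 - p$CD) * (score vv (payY R S T P) - R) = vv DC*((T-R)*p$DC - (R-S)*(1-p$CD)) + vv DD*((T-R)*p$DD - (R-P)*(1-p$CD))"
    unfolding scoreY by (rule ident[OF F(5) F(6)])
  have n3: "(T-R)*p$DC - (R-S)*(1-p$CD) < 0" and n4: "(T-R)*p$DD - (R-P)*(1-p$CD) < 0"
    using St unfolding Strict_def by auto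
  have t3: "vv DC*((T-R)*p$DC - (R-S)*(1-p$CD)) \<le> 0" using F(3) n3 by (intro mult_nonneg_nonpos) auto
  have t4: "vv DD*((T-R)*p$DD - (R-P)*(1-p$CD)) \<le> 0" using F(4) n4 by (intro mult_nonneg_nonpos) auto
  have "0 \<le> (1 - p$CD) * (score vv (payY R S T P) - R)" using a H by simp
  then have "vv DC*((T-R)*p$DC - (R-S)*(1-p$CD)) = 0" "vv DD*((T-R)*p$DD - (R-P)*(1-p$CD)) = 0"
    using e t3 t4 by linarith+
  then have z3: "vv DC = 0" and z4: "vv DD = 0" using n3 n4 by auto
  then have "vv CD * (1 - p$CD) = 0" using F(6) by simp
  then have z2: "vv CD = 0" using a by simp
  then have z1: "vv CC = 1" using F(5) z3 z4 by simp
  show "score vv (payY R S T P) = R" using z1 z2 z3 z4 by (simp add: scoreY)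
  show "score vv (payX R S T P) = R" using z1 z2 z3 z4 by (simp add: scoreX)
qed

lemma setN: "{p \<in> agreeable_strats. p = repeat_strat \<or> nash_type R S T P p} = {p \<in> agreeable_strats. Ineq R S T P p}"
proof (intro set_eqI iffI)
  fix p assume "p \<in> {p \<in> agreeable_strats. p = repeat_strat \<or> nash_type R S T P p}"
  then have pA: "p \<in> agreeable_strats" and o: "p = repeat_strat \<or> nash_type R S T P p" by auto
  show "p \<in> {p \<in> agreeable_strats. Ineq R S T P p}"
  proof (cases "p = repeat_strat")
    case True then show ?thesis using pA by (simp add: Ineq_def repeat_strat_def)
  next
    case False then have "nash_type R S T P p" using o by simp
    then show ?thesis using pA nash_ineq1 nash_ineq2 unfolding Ineq_def by blast
  qed
next
  fix p assume "p \<in> {p \<in> agreeable_strats. Ineq R S T P p}"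
  then have pA: "p \<in> agreeable_strats" and I: "Ineq R S T P p" by auto
  have b: "\<And>w. 0 \<le> p$w \<and> p$w \<le> 1" "p$CC = 1" using pA by (auto simp: agreeable_strats_def agreeable_def)
  show "p \<in> {p \<in> agreeable_strats. p = repeat_strat \<or> nash_type R S T P p}"
  proof (cases "p$CD < 1")
    case True then show ?thesis using I_nash[OF pA True I] pA by simp
  next
    case False
    then have a: "p$CD = 1" using b(1)[of CD] by simp
    have "(T-R)*p$DC \<le> 0" "(T-R)*p$DD \<le> 0" using I a unfolding Ineq_def by auto
    then have "p$DC \<le> 0" "p$DD \<le> 0" using TR by (simp_all add: mult_le_0_iff)
    then have "p$DC = 0" "p$DD = 0" using b(1)[of DC] b(1)[of DD] by auto
    then have "p = repeat_strat" using a b(2) unfolding repeat_strat_def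
      by (simp add: vec_eq_iff) (metis outcome.exhaust xcoop.simps)
    then show ?thesis using pA by simp
  qed
qed

lemma setG: "{p \<in> agreeable_strats. good R S T P p} = {p \<in> agreeable_strats. Strict R S T P p}"
  using good_Strict Strict_good by blast


lemma closedN: "closed {p \<in> agreeable_strats. Ineq R S T P p}"
proof -
  have "{p \<in> agreeable_strats. Ineq R S T P p} = {p. (\<forall>w. 0 \<le> p$w) \<and> (\<forall>w. p$w \<le> 1) \<and> p$CC = 1 \<and>
     (T-R)*p$DC \<le> (R-S)*(1-p$CD) \<and> (T-R)*p$DD \<le> (R-P)*(1-p$CD)}"
    by (auto simp: agreeable_strats_def agreeable_def Ineq_def)
  also have "closed \<dots>"
    by (intro closed_Collect_conj closed_Collect_all closed_Collect_le closed_Collect_eq continuous_intros)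
  finally show ?thesis .
qed

lemma convexN: "convex {p \<in> agreeable_strats. Ineq R S T P p}"
  unfolding convex_def
proof (intro ballI allI impI)
  fix x y :: "real^outcome" and u v :: real
  assume x: "x \<in> {p \<in> agreeable_strats. Ineq R S T P p}" and y: "y \<in> {p \<in> agreeable_strats. Ineq R S T P p}"
    and u: "0 \<le> u" and v: "0 \<le> v" and uv: "u + v = 1"
  have xb: "\<And>w. 0 \<le> x$w \<and> x$w \<le> 1" "x$CC = 1" and yb: "\<And>w. 0 \<le> y$w \<and> y$w \<le> 1" "y$CC = 1"
    using x y by (auto simp: agreeable_strats_def agreeable_def)
  have xi: "(T-R)*x$DC \<le> (R-S)*(1-x$CD)" "(T-R)*x$DD \<le> (R-P)*(1-x$CD)"
    and yi: "(T-R)*y$DC \<le> (R-S)*(1-y$CD)" "(T-R)*y$DD \<le> (R-P)*(1-y$CD)"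
    using x y by (auto simp: Ineq_def)
  have comp: "(u *\<^sub>R x + v *\<^sub>R y)$w = u * x$w + v * y$w" for w by simp
  have r1: "0 \<le> u * x$w + v * y$w" for w using xb yb u v by simp
  have r2: "u * x$w + v * y$w \<le> 1" for w
  proof -
    have "u * x$w \<le> u" "v * y$w \<le> v" using xb yb u v by (auto intro: mult_left_le)
    then show ?thesis using uv by simp
  qed
  have L: "(T-R)*(u * z1 + v * z2) \<le> K*(1-(u * a1 + v * a2))"
    if "(T-R)*z1 \<le> K*(1-a1)" "(T-R)*z2 \<le> K*(1-a2)" for z1 z2 a1 a2 K
  proof -
    have "u * ((T-R)*z1) \<le> u * (K*(1-a1))" "v * ((T-R)*z2) \<le> v * (K*(1-a2))"
      using that u v by (auto intro: mult_left_mono)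
    then have "u * ((T-R)*z1) + v * ((T-R)*z2) \<le> u * (K*(1-a1)) + v * (K*(1-a2))" by simp
    moreover have "u * (K*(1-a1)) + v * (K*(1-a2)) = K*(1-(u * a1 + v * a2))"
      using uv by (simp add: algebra_simps) (metis mult.commute add.commute distrib_left mult_1_right uv)
    ultimately show ?thesis by (simp add: algebra_simps)
  qed
  show "u *\<^sub>R x + v *\<^sub>R y \<in> {p \<in> agreeable_strats. Ineq R S T P p}"
    unfolding agreeable_strats_def agreeable_def Ineq_def comp
    using r1 r2 xb(2) yb(2) uv L[OF xi(1) yi(1)] L[OF xi(2) yi(2)] by simp
qed

lemma pert:
  assumes pA: "p \<in> agreeable_strats" and w: "w \<noteq> CC" and pw: "p$w < 1" and e: "e > 0"
  shows "\<exists>d>0. (\<chi> k. if k = w then p$k + d else p$k) \<in> agreeable_strats \<and> dist (\<chi> k. if k = w then p$k + d else p$k) p < e"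
proof -
  define d where "d = min (e/2) (1 - p$w)"
  have d: "d > 0" "d \<le> e/2" "d \<le> 1 - p$w" using e pw by (auto simp: d_def min_def)
  define q where "q = (\<chi> k. if k = w then p$k + d else p$k)"
  have "q \<in> agreeable_strats" using pA d w unfolding q_def by (auto simp: agreeable_strats_def agreeable_def)
  moreover have "dist q p < e"
  proof -
    have "dist q p = norm (q - p)" by (simp add: dist_norm)
    also have "\<dots> \<le> (\<Sum>i\<in>UNIV. \<bar>(q - p)$i\<bar>)" by (rule norm_le_l1_cart)
    also have "\<dots> = (\<Sum>i\<in>UNIV. if i = w then d else 0)" using d by (intro sum.cong) (auto simp: q_def)
    also have "\<dots> = d" by simp
    finally show ?thesis using d e by simp
  qed
  ultimately show ?thesis using d unfolding q_def by blast
qed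

lemma interiorN:
  "(top_of_set agreeable_strats) interior_of {p \<in> agreeable_strats. Ineq R S T P p} = {p \<in> agreeable_strats. Strict R S T P p}"
proof (intro set_eqI iffI)
  fix p assume "p \<in> (top_of_set agreeable_strats) interior_of {p \<in> agreeable_strats. Ineq R S T P p}"
  then obtain U where U: "openin (top_of_set agreeable_strats) U" "p \<in> U" "U \<subseteq> {p \<in> agreeable_strats. Ineq R S T P p}"
    unfolding interior_of_def by blast
  obtain V where V: "open V" "U = agreeable_strats \<inter> V" using U(1) openin_open by blast
  obtain e where e: "e > 0" "ball p e \<subseteq> V" using V U(2) open_contains_ball by blast
  have near: "Ineq R S T P q" if "q \<in> agreeable_strats" "dist q p < e" for q
    using that e V U(3) by (auto simp: dist_commute)
  have pA: "p \<in> agreeable_strats" and I: "Ineq R S T P p" using U by auto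
  have b: "\<And>w. 0 \<le> p$w \<and> p$w \<le> 1" using pA by (auto simp: agreeable_strats_def)
  have s1: "(T-R)*p$DC < (R-S)*(1-p$CD)"
  proof (rule ccontr)
    assume "\<not> ?thesis"
    then have eq: "(T-R)*p$DC = (R-S)*(1-p$CD)" using I unfolding Ineq_def by simp
    show False
    proof (cases "p$DC < 1")
      case True
      obtain d where d: "d > 0" "(\<chi> k. if k = DC then p$k + d else p$k) \<in> agreeable_strats"
        "dist (\<chi> k. if k = DC then p$k + d else p$k) p < e"
        using pert[OF pA _ True e(1)] by auto
      have "Ineq R S T P (\<chi> k. if k = DC then p$k + d else p$k)" using near d by blast
      then have "(T-R)*(p$DC + d) \<le> (R-S)*(1-p$CD)" unfolding Ineq_def by simp
      moreover have "(T-R)*d > 0" using d TR by simp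
      ultimately show False using eq by (simp add: algebra_simps)
    next
      case False
      then have "p$DC = 1" using b[of DC] by simp
      then have "(R-S)*(1-p$CD) > 0" using eq TR by simp
      then have a: "p$CD < 1" using PS RP by (simp add: zero_less_mult_iff)
      obtain d where d: "d > 0" "(\<chi> k. if k = CD then p$k + d else p$k) \<in> agreeable_strats"
        "dist (\<chi> k. if k = CD then p$k + d else p$k) p < e"
        using pert[OF pA _ a e(1)] by auto
      have "Ineq R S T P (\<chi> k. if k = CD then p$k + d else p$k)" using near d by blast
      then have "(T-R)*p$DC \<le> (R-S)*(1-(p$CD + d))" unfolding Ineq_def by simp
      moreover have "(R-S)*d > 0" using d PS RP by simp
      ultimately show False using eq by (simp add: algebra_simps)
    qed
  qed
  have s2: "(T-R)*p$DD < (R-P)*(1-p$CD)"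
  proof (rule ccontr)
    assume "\<not> ?thesis"
    then have eq: "(T-R)*p$DD = (R-P)*(1-p$CD)" using I unfolding Ineq_def by simp
    show False
    proof (cases "p$DD < 1")
      case True
      obtain d where d: "d > 0" "(\<chi> k. if k = DD then p$k + d else p$k) \<in> agreeable_strats"
        "dist (\<chi> k. if k = DD then p$k + d else p$k) p < e"
        using pert[OF pA _ True e(1)] by auto
      have "Ineq R S T P (\<chi> k. if k = DD then p$k + d else p$k)" using near d by blast
      then have "(T-R)*(p$DD + d) \<le> (R-P)*(1-p$CD)" unfolding Ineq_def by simp
      moreover have "(T-R)*d > 0" using d TR by simp
      ultimately show False using eq by (simp add: algebra_simps)
    next
      case False
      then have "p$DD = 1" using b[of DD] by simp
      then have "(R-P)*(1-p$CD) > 0" using eq TR by simp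
      then have a: "p$CD < 1" using RP by (simp add: zero_less_mult_iff)
      obtain d where d: "d > 0" "(\<chi> k. if k = CD then p$k + d else p$k) \<in> agreeable_strats"
        "dist (\<chi> k. if k = CD then p$k + d else p$k) p < e"
        using pert[OF pA _ a e(1)] by auto
      have "Ineq R S T P (\<chi> k. if k = CD then p$k + d else p$k)" using near d by blast
      then have "(T-R)*p$DD \<le> (R-P)*(1-(p$CD + d))" unfolding Ineq_def by simp
      moreover have "(R-P)*d > 0" using d RP by simp
      ultimately show False using eq by (simp add: algebra_simps)
    qed
  qed
  show "p \<in> {p \<in> agreeable_strats. Strict R S T P p}" using pA s1 s2 by (simp add: Strict_def)
next
  fix p assume p: "p \<in> {p \<in> agreeable_strats. Strict R S T P p}"
  have op: "open {q :: real^outcome. (T-R)*q$DC < (R-S)*(1-q$CD) \<and> (T-R)*q$DD < (R-P)*(1-q$CD)}"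
    by (intro open_Collect_conj open_Collect_less continuous_intros)
  show "p \<in> (top_of_set agreeable_strats) interior_of {p \<in> agreeable_strats. Ineq R S T P p}"
    unfolding interior_of_def
  proof (intro CollectI exI conjI)
    show "openin (top_of_set agreeable_strats) (agreeable_strats \<inter> {q. (T-R)*q$DC < (R-S)*(1-q$CD) \<and> (T-R)*q$DD < (R-P)*(1-q$CD)})"
      using op by (rule openin_open_Int)
    show "p \<in> agreeable_strats \<inter> {q. (T-R)*q$DC < (R-S)*(1-q$CD) \<and> (T-R)*q$DD < (R-P)*(1-q$CD)}"
      using p by (simp add: Strict_def)
    show "agreeable_strats \<inter> {q. (T-R)*q$DC < (R-S)*(1-q$CD) \<and> (T-R)*q$DD < (R-P)*(1-q$CD)} \<subseteq> {p \<in> agreeable_strats. Ineq R S T P p}"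
      by (auto simp: Ineq_def)
  qed
qed

end

theorem corollary1p6:
  fixes R S T P :: real
  assumes "T > R" and "R > P" and "P > S" and "2 * R > T + S"
  shows "closed {p \<in> agreeable_strats. p = repeat_strat \<or> nash_type R S T P p}
    \<and> convex {p \<in> agreeable_strats. p = repeat_strat \<or> nash_type R S T P p}
    \<and> (top_of_set agreeable_strats) interior_of
        {p \<in> agreeable_strats. p = repeat_strat \<or> nash_type R S T P p}
      = {p \<in> agreeable_strats. good R S T P p}"
  unfolding setN[OF assms] setG[OF assms]
  using closedN[OF assms] convexN[OF assms] interiorN[OF assms] by blast

end
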